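(* Let $k\in\mathbb N$ and let $f:\Xi_k\to\mathbb R$ satisfy $\mathfrak a^\dagger_{k-1}f=0$. Then $$\mathcal E_{\alpha,k}(f)\ge k\Big(\inf_{\xi\in\Xi_{k-1}}\mathrm{gap}_{\rm RW}(\alpha+\xi)\Big)\,\mathrm{Var}_{\alpha,k}(f).$$
   Context: $V$ is a finite set with symmetric non-negative weights $c_{xy}=c_{yx}\ge0$ forming a connected graph, $\alpha=(\alpha_x)_{x\in V}$ positive, $|\alpha|=\sum_x\alpha_x$. $\Xi_k:=\{\eta\in\mathbb N_0^V:\sum_x\eta_x=k\}$. $\mu_{\alpha,k}(\eta)\propto\prod_x\frac{\Gamma(\alpha_x+\eta_x)}{\Gamma(\alpha_x)\eta_x!}$ is a probability on $\Xi_k$, $\langle f,g\rangle_{\alpha,k}=\sum_\eta\mu_{\alpha,k}(\eta)f(\eta)g(\eta)$, $\mathrm{Var}_{\alpha,k}(f)=\langle f,f\rangle_{\alpha,k}-\langle f,1\rangle_{\alpha,k}^2$. $L_kf(\eta)=\sum_x\eta_x\sum_yc_{xy}(\alpha_y+\eta_y)(f(\eta-\delta_x+\delta_y)-f(\eta))$ ($\eta-\delta_x+\delta_y$: move a particle from $x$ to $y$) and $\mathcal E_{\alpha,k}(f)=\langle f,-L_kf\rangle_{\alpha,k}$. The creation operator is $\mathfrak a^\dagger_{k-1}f(\xi)=\sum_x(\xi_x+\alpha_x)f(\xi+\delta_x)$ for $\xi\in\Xi_{k-1}$. For any positive weight vector $\beta=(\beta_x)_{x\in V}$, $\mathrm{gap}_{\rm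 RW}(\beta)$ is the smallest nonzero eigenvalue of $-A_\beta$, where $A_\beta\phi(x)=\sum_yc_{xy}\beta_y(\phi(y)-\phi(x))$; here $\alpha+\xi$ is the vector $(\alpha_x+\xi_x)_{x\in V}$. *)

theory Defs
  imports "HOL-Analysis.Analysis"
begin

definition Xi :: "nat \<Rightarrow> ('v::finite \<Rightarrow> nat) set" where
  "Xi k = {\<eta>. (\<Sum>x\<in>UNIV. \<eta> x) = k}"

definition mu_weight :: "('v::finite \<Rightarrow> real) \<Rightarrow> ('v \<Rightarrow> nat) \<Rightarrow> real" where
  "mu_weight \<alpha> \<eta> = (\<Prod>x\<in>UNIV. Gamma (\<alpha> x + real (\<eta> x)) / (Gamma (\<alpha> x) * fact (\<eta> x)))"

definition mu :: "('v::finite \<Rightarrow> real) \<Rightarrow> nat \<Rightarrow> ('v \<Rightarrow> nat) \<Rightarrow> real" where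
  "mu \<alpha> k \<eta> = mu_weight \<alpha> \<eta> / (\<Sum>\<zeta>\<in>Xi k. mu_weight \<alpha> \<zeta>)"

definition inner_mu :: "('v::finite \<Rightarrow> real) \<Rightarrow> nat \<Rightarrow> (('v \<Rightarrow> nat) \<Rightarrow> real)
    \<Rightarrow> (('v \<Rightarrow> nat) \<Rightarrow> real) \<Rightarrow> real" where
  "inner_mu \<alpha> k f g = (\<Sum>\<eta>\<in>Xi k. mu \<alpha> k \<eta> * f \<eta> * g \<eta>)"

definition Var_mu :: "('v::finite \<Rightarrow> real) \<Rightarrow> nat \<Rightarrow> (('v \<Rightarrow> nat) \<Rightarrow> real) \<Rightarrow> real" where
  "Var_mu \<alpha> k f = inner_mu \<alpha> k f f - (inner_mu \<alpha> k f (\<lambda>_. 1))\<^sup>2"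

text \<open>eta - delta_x + delta_y (used only when eta x \<ge> 1).\<close>
definition move :: "('v \<Rightarrow> nat) \<Rightarrow> 'v \<Rightarrow> 'v \<Rightarrow> ('v \<Rightarrow> nat)" where
  "move \<eta> x y = (\<lambda>z. \<eta> z - (if z = x then 1 else 0) + (if z = y then 1 else 0))"

definition gen_L :: "('v::finite \<Rightarrow> 'v \<Rightarrow> real) \<Rightarrow> ('v \<Rightarrow> real)
    \<Rightarrow> (('v \<Rightarrow> nat) \<Rightarrow> real) \<Rightarrow> ('v \<Rightarrow> nat) \<Rightarrow> real" where
  "gen_L c \<alpha> f \<eta> = (\<Sum>x\<in>UNIV. real (\<eta> x) *
      (\<Sum>y\<in>UNIV. c x y * (\<alpha> y + real (\<eta> y)) * (f (move \<eta> x y) - f \<eta>)))"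

definition energy :: "('v::finite \<Rightarrow> 'v \<Rightarrow> real) \<Rightarrow> ('v \<Rightarrow> real) \<Rightarrow> nat
    \<Rightarrow> (('v \<Rightarrow> nat) \<Rightarrow> real) \<Rightarrow> real" where
  "energy c \<alpha> k f = inner_mu \<alpha> k f (\<lambda>\<eta>. - gen_L c \<alpha> f \<eta>)"

definition creation :: "('v::finite \<Rightarrow> real) \<Rightarrow> (('v \<Rightarrow> nat) \<Rightarrow> real) \<Rightarrow> ('v \<Rightarrow> nat) \<Rightarrow> real" where
  "creation \<alpha> f \<xi> = (\<Sum>x\<in>UNIV. (real (\<xi> x) + \<alpha> x) * f (\<xi>(x := \<xi> x + 1)))"

definition A_RW :: "('v::finite \<Rightarrow> 'v \<Rightarrow> real) \<Rightarrow> ('v \<Rightarrow> real) \<Rightarrow> ('v \<Rightarrow> real) \<Rightarrow> 'v \<Rightarrow> real" where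
  "A_RW c \<beta> \<phi> x = (\<Sum>y\<in>UNIV. c x y * \<beta> y * (\<phi> y - \<phi> x))"

definition is_eigenvalue_negA :: "('v::finite \<Rightarrow> 'v \<Rightarrow> real) \<Rightarrow> ('v \<Rightarrow> real) \<Rightarrow> real \<Rightarrow> bool" where
  "is_eigenvalue_negA c \<beta> l \<longleftrightarrow> (\<exists>\<phi>. (\<exists>x. \<phi> x \<noteq> 0) \<and> (\<forall>x. - A_RW c \<beta> \<phi> x = l * \<phi> x))"

definition gap_RW :: "('v::finite \<Rightarrow> 'v \<Rightarrow> real) \<Rightarrow> ('v \<Rightarrow> real) \<Rightarrow> real" where
  "gap_RW c \<beta> = Inf {l. l \<noteq> 0 \<and> is_eigenvalue_negA c \<beta> l}"

end

theory Submission
  imports Defs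
begin



definition Bf :: "('v::finite \<Rightarrow> 'v \<Rightarrow> real) \<Rightarrow> ('v \<Rightarrow> real) \<Rightarrow> ('v \<Rightarrow> real) \<Rightarrow> ('v \<Rightarrow> real) \<Rightarrow> real" where
  "Bf c \<beta> \<phi> \<psi> = (\<Sum>x\<in>UNIV. \<beta> x * \<psi> x * (\<Sum>y\<in>UNIV. c x y * \<beta> y * (\<phi> x - \<phi> y)))"

lemma Bf_sym_form:
  fixes c :: "'v::finite \<Rightarrow> 'v \<Rightarrow> real"
  assumes sym: "\<And>x y. c x y = c y x"
  shows "Bf c \<beta> \<phi> \<psi> = (\<Sum>x\<in>UNIV. \<Sum>y\<in>UNIV. \<beta> x * c x y * \<beta> y * (\<phi> x - \<phi> y) * (\<psi> x - \<psi> y)) / 2"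
proof -
  have S1: "Bf c \<beta> \<phi> \<psi> = (\<Sum>x\<in>UNIV. \<Sum>y\<in>UNIV. \<beta> x * c x y * \<beta> y * \<psi> x * (\<phi> x - \<phi> y))"
    unfolding Bf_def by (simp add: sum_distrib_left mult_ac)
  have S2: "(\<Sum>x\<in>UNIV. \<Sum>y\<in>UNIV. \<beta> x * c x y * \<beta> y * \<psi> x * (\<phi> x - \<phi> y))
      = (\<Sum>x\<in>UNIV. \<Sum>y\<in>UNIV. \<beta> x * c x y * \<beta> y * \<psi> y * (\<phi> y - \<phi> x))"
    by (subst sum.swap) (simp add: sym mult_ac)
  have "2 * Bf c \<beta> \<phi> \<psi> = (\<Sum>x\<in>UNIV. \<Sum>y\<in>UNIV. \<beta> x * c x y * \<beta> y * \<psi> x * (\<phi> x - \<phi> y))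
      + (\<Sum>x\<in>UNIV. \<Sum>y\<in>UNIV. \<beta> x * c x y * \<beta> y * \<psi> y * (\<phi> y - \<phi> x))"
    using S1 S2 by simp
  also have "\<dots> = (\<Sum>x\<in>UNIV. \<Sum>y\<in>UNIV. \<beta> x * c x y * \<beta> y * (\<phi> x - \<phi> y) * (\<psi> x - \<psi> y))"
    by (simp add: sum.distrib[symmetric] algebra_simps)
  finally show ?thesis by simp
qed

lemma Bf_nonneg:
  fixes c :: "'v::finite \<Rightarrow> 'v \<Rightarrow> real"
  assumes sym: "\<And>x y. c x y = c y x" and nn: "\<And>x y. c x y \<ge> 0" and bp: "\<And>x. \<beta> x > 0"
  shows "Bf c \<beta> \<phi> \<phi> \<ge> 0"
  unfolding Bf_sym_form[OF sym]
proof (intro divide_nonneg_pos sum_nonneg)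
  fix x y
  have "\<beta> x * c x y * \<beta> y * (\<phi> x - \<phi> y) * (\<phi> x - \<phi> y) = (\<beta> x * c x y * \<beta> y) * (\<phi> x - \<phi> y)^2"
    by (simp add: power2_eq_square)
  also have "\<dots> \<ge> 0" by (intro mult_nonneg_nonneg) (auto simp: nn bp less_imp_le)
  finally show "\<beta> x * c x y * \<beta> y * (\<phi> x - \<phi> y) * (\<phi> x - \<phi> y) \<ge> 0" .
qed simp

lemma Bf_zero_const:
  fixes c :: "'v::finite \<Rightarrow> 'v \<Rightarrow> real"
  assumes sym: "\<And>x y. c x y = c y x" and nn: "\<And>x y. c x y \<ge> 0" and bp: "\<And>x. \<beta> x > 0"
    and conn: "\<And>x y. (x, y) \<in> {(a, b). c a b > 0}\<^sup>*"
    and z: "Bf c \<beta> \<phi> \<phi> = 0"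
  shows "\<phi> x = \<phi> y"
proof -
  let ?t = "\<lambda>x y. \<beta> x * c x y * \<beta> y * (\<phi> x - \<phi> y) * (\<phi> x - \<phi> y)"
  have tnn: "?t x y \<ge> 0" for x y
  proof -
    have "?t x y = (\<beta> x * c x y * \<beta> y) * (\<phi> x - \<phi> y)^2"
      by (simp add: power2_eq_square)
    also have "\<dots> \<ge> 0" by (intro mult_nonneg_nonneg) (auto simp: nn bp less_imp_le)
    finally show ?thesis .
  qed
  have "(\<Sum>x\<in>UNIV. \<Sum>y\<in>UNIV. ?t x y) = 0" using z unfolding Bf_sym_form[OF sym] by simp
  hence "\<forall>x\<in>UNIV. (\<Sum>y\<in>UNIV. ?t x y) = 0"
    by (subst (asm) sum_nonneg_eq_0_iff) (auto intro: sum_nonneg tnn)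
  hence t0: "\<And>x y. ?t x y = 0"
    by (metis (no_types, lifting) UNIV_I finite sum_nonneg_eq_0_iff tnn)
  have edge: "\<phi> a = \<phi> b" if "c a b > 0" for a b
  proof -
    have "\<beta> a * c a b * \<beta> b > 0" using that bp by simp
    with t0[of a b] show ?thesis by (auto simp del: mult_eq_0_iff)
  qed
  have "(x, y) \<in> {(a, b). c a b > 0}\<^sup>*" by (rule conn)
  thus ?thesis
  proof (induction rule: rtrancl_induct)
    case base then show ?case by simp
  next
    case (step y z) then show ?case using edge by auto
  qed
qed


lemma Bf_addL: "Bf c \<beta> (\<lambda>x. \<phi> x + \<psi> x) g = Bf c \<beta> \<phi> g + Bf c \<beta> \<psi> g"
proof -
  have e: "(\<Sum>y\<in>UNIV. c x y * \<beta> y * ((\<phi> x + \<psi> x) - (\<phi> y + \<psi> y))) = (\<Sum>y\<in>UNIV. c x y * \<beta> y * (\<phi> x - \<phi> y)) + (\<Sum>y\<in>UNIV. c x y * \<beta> y * (\<psi> x - \<psi> y))" for x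
    by (simp add: sum.distrib[symmetric] algebra_simps)
  show ?thesis unfolding Bf_def e by (simp add: distrib_left sum.distrib)
qed
lemma Bf_addR: "Bf c \<beta> g (\<lambda>x. \<phi> x + \<psi> x) = Bf c \<beta> g \<phi> + Bf c \<beta> g \<psi>"
  unfolding Bf_def by (simp add: algebra_simps sum.distrib)
lemma Bf_multL: "Bf c \<beta> (\<lambda>x. t * \<phi> x) g = t * Bf c \<beta> \<phi> g"
proof -
  have "Bf c \<beta> (\<lambda>x. t * \<phi> x) g = (\<Sum>x\<in>UNIV. t * (\<beta> x * g x * (\<Sum>y\<in>UNIV. c x y * \<beta> y * (\<phi> x - \<phi> y))))"
    unfolding Bf_def by (intro sum.cong refl) (simp add: sum_distrib_left algebra_simps)
  thus ?thesis unfolding Bf_def by (simp add: sum_distrib_left)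
qed
lemma Bf_multR: "Bf c \<beta> g (\<lambda>x. t * \<phi> x) = t * Bf c \<beta> g \<phi>"
  unfolding Bf_def by (simp add: sum_distrib_left algebra_simps)
lemma Bf_expand:
  "Bf c \<beta> (\<lambda>x. \<phi> x + t * \<psi> x) (\<lambda>x. \<phi> x + t * \<psi> x)
   = Bf c \<beta> \<phi> \<phi> + t * (Bf c \<beta> \<phi> \<psi> + Bf c \<beta> \<psi> \<phi>) + t^2 * Bf c \<beta> \<psi> \<psi>"
  by (simp add: Bf_addL Bf_addR Bf_multL Bf_multR algebra_simps power2_eq_square)
lemma Bf_scale:
  "Bf c \<beta> (\<lambda>x. s * \<phi> x) (\<lambda>x. s * \<phi> x) = s^2 * Bf c \<beta> \<phi> \<phi>"
  by (simp add: Bf_multL Bf_multR power2_eq_square)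

lemma abs_le_sq: "\<bar>a::real\<bar> \<le> 1 + a^2"
proof -
  have "0 \<le> (\<bar>a\<bar> - 1)^2" by simp
  hence "0 \<le> \<bar>a\<bar>^2 - 2 * \<bar>a\<bar> + 1" by (simp add: power2_diff)
  hence "2 * \<bar>a\<bar> \<le> a^2 + 1" by simp
  moreover have "\<bar>a\<bar> \<le> 2 * \<bar>a\<bar>" by simp
  ultimately show ?thesis by linarith
qed


lemma Bf_comm:
  fixes c :: "'v::finite \<Rightarrow> 'v \<Rightarrow> real"
  assumes sym: "\<And>x y. c x y = c y x"
  shows "Bf c \<beta> \<phi> \<psi> = Bf c \<beta> \<psi> \<phi>"
  unfolding Bf_sym_form[OF sym] by (simp add: mult_ac)

lemma Bf_one:
  fixes c :: "'v::finite \<Rightarrow> 'v \<Rightarrow> real"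
  assumes sym: "\<And>x y. c x y = c y x"
  shows "Bf c \<beta> \<phi> (\<lambda>_. 1) = 0"
  unfolding Bf_sym_form[OF sym] by simp

lemma Bf_A:
  "Bf c \<beta> \<phi> \<psi> = (\<Sum>x\<in>UNIV. \<beta> x * \<psi> x * (- A_RW c \<beta> \<phi> x))"
  unfolding Bf_def A_RW_def
  by (simp add: sum_negf[symmetric] algebra_simps)

lemma quad_zero:
  fixes a b :: real
  assumes "\<And>t. 2 * t * b + t^2 * a \<ge> 0"
  shows "b = 0"
proof (rule ccontr)
  assume nz: "b \<noteq> 0"
  define s where "s = 1 / (\<bar>a\<bar> + 1)"
  have sp: "s > 0" unfolding s_def by (simp add: add_pos_nonneg)
  have sa: "s * a < 2"
  proof -
    have "s * a \<le> s * \<bar>a\<bar>" using sp by (simp add: mult_left_mono)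
    also have "\<dots> < 1" unfolding s_def by simp
    finally show ?thesis by simp
  qed
  have "2 * (- b * s) * b + (- b * s)^2 * a \<ge> 0" by (rule assms)
  hence "b^2 * s * (s * a - 2) \<ge> 0" by (simp add: algebra_simps power2_eq_square)
  moreover have "b^2 * s * (s * a - 2) < 0"
    using nz sp sa by (intro mult_pos_neg) auto
  ultimately show False by simp
qed

lemma gap_bound:
  fixes c :: "'v::finite \<Rightarrow> 'v \<Rightarrow> real" and \<beta> \<phi> :: "'v \<Rightarrow> real"
  assumes sym: "\<And>x y. c x y = c y x" and nn: "\<And>x y. c x y \<ge> 0" and bp: "\<And>x. \<beta> x > 0"
    and conn: "\<And>x y. (x, y) \<in> {(a, b). c a b > 0}\<^sup>*"
    and orth: "(\<Sum>x\<in>UNIV. \<beta> x * \<phi> x) = 0"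
  shows "Bf c \<beta> \<phi> \<phi> \<ge> gap_RW c \<beta> * (\<Sum>x\<in>UNIV. \<beta> x * (\<phi> x)^2)"
proof -
  define N where "N = (\<lambda>\<psi>::'v\<Rightarrow>real. \<Sum>x\<in>UNIV. \<beta> x * (\<psi> x)^2)"
  have Nnn: "N \<psi> \<ge> 0" for \<psi> unfolding N_def by (intro sum_nonneg) (auto simp: bp less_imp_le)
  have Nzero: "\<psi> x = 0" if "N \<psi> = 0" for \<psi> x
  proof -
    have "\<forall>x\<in>UNIV. \<beta> x * (\<psi> x)^2 = 0" using that unfolding N_def
      by (subst (asm) sum_nonneg_eq_0_iff) (auto simp: bp less_imp_le)
    hence "\<beta> x * (\<psi> x)^2 = 0" by blast
    thus ?thesis using bp[of x] by simp
  qed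
  show ?thesis
  proof (cases "N \<phi> = 0")
    case True
    thus ?thesis using Bf_nonneg[OF sym nn bp] unfolding N_def by simp
  next
    case False
    hence Npos: "N \<phi> > 0" using Nnn[of \<phi>] by simp
    define S where "S = {v :: real^'v. (\<Sum>x\<in>UNIV. \<beta> x * v$x) = 0 \<and> (\<Sum>x\<in>UNIV. \<beta> x * (v$x)^2) = 1}"
    define F where "F = (\<lambda>v :: real^'v. Bf c \<beta> (\<lambda>x. v$x) (\<lambda>x. v$x))"
    have Fcont: "continuous_on S F"
      unfolding F_def Bf_def by (intro continuous_intros)
    have closedS: "closed S"
      unfolding S_def by (intro closed_Collect_conj closed_Collect_eq continuous_intros)
    have bndS: "bounded S"
    proof -
      have "norm v \<le> (\<Sum>x\<in>UNIV. 1 + 1 / \<beta> x)" if "v \<in> S" for v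
      proof -
        have "norm v \<le> (\<Sum>x\<in>UNIV. \<bar>v$x\<bar>)" by (rule norm_le_l1_cart)
        also have "\<dots> \<le> (\<Sum>x\<in>UNIV. 1 + 1 / \<beta> x)"
        proof (intro sum_mono)
          fix x
          have "\<beta> x * (v$x)^2 \<le> (\<Sum>x\<in>UNIV. \<beta> x * (v$x)^2)"
            by (rule member_le_sum) (auto simp: bp less_imp_le)
          hence "\<beta> x * (v$x)^2 \<le> 1" using that unfolding S_def by simp
          hence "(v$x)^2 \<le> 1 / \<beta> x" using bp[of x] by (simp add: field_simps)
          moreover have "\<bar>v$x\<bar> \<le> 1 + (v$x)^2" by (rule abs_le_sq)
          ultimately show "\<bar>v$x\<bar> \<le> 1 + 1 / \<beta> x" by linarith
        qed
        finally show ?thesis .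
      qed
      thus ?thesis unfolding bounded_iff by blast
    qed
    have compS: "compact S" using closedS bndS by (simp add: compact_eq_bounded_closed)
    define v1 where "v1 = (\<chi> x. \<phi> x / sqrt (N \<phi>))"
    have v1S: "v1 \<in> S"
    proof -
      have "(\<Sum>x\<in>UNIV. \<beta> x * v1$x) = (\<Sum>x\<in>UNIV. \<beta> x * \<phi> x) / sqrt (N \<phi>)"
        unfolding v1_def by (simp add: sum_divide_distrib)
      moreover have "(\<Sum>x\<in>UNIV. \<beta> x * (v1$x)^2) = N \<phi> / N \<phi>"
      proof -
        have "(\<Sum>x\<in>UNIV. \<beta> x * (v1$x)^2) = (\<Sum>x\<in>UNIV. \<beta> x * (\<phi> x)^2) / N \<phi>"
          unfolding v1_def using Npos by (simp add: power_divide sum_divide_distrib)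
        thus ?thesis unfolding N_def .
      qed
      ultimately show ?thesis unfolding S_def using orth Npos by simp
    qed
    obtain v0 where v0S: "v0 \<in> S" and v0min: "\<And>v. v \<in> S \<Longrightarrow> F v0 \<le> F v"
      using continuous_attains_inf[OF compS _ Fcont] v1S by blast
    define \<phi>0 where "\<phi>0 = (\<lambda>x. v0$x)"
    define l0 where "l0 = Bf c \<beta> \<phi>0 \<phi>0"
    have o0: "(\<Sum>x\<in>UNIV. \<beta> x * \<phi>0 x) = 0" and N0: "N \<phi>0 = 1"
      using v0S unfolding S_def \<phi>0_def N_def by auto
    have claim1: "Bf c \<beta> \<psi> \<psi> \<ge> l0 * N \<psi>" if "(\<Sum>x\<in>UNIV. \<beta> x * \<psi> x) = 0" for \<psi>
    proof (cases "N \<psi> = 0")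
      case True thus ?thesis using Bf_nonneg[OF sym nn bp] by simp
    next
      case False
      hence Np: "N \<psi> > 0" using Nnn[of \<psi>] by simp
      define u where "u = (\<chi> x. \<psi> x / sqrt (N \<psi>))"
      have uS: "u \<in> S"
      proof -
        have "(\<Sum>x\<in>UNIV. \<beta> x * u$x) = (\<Sum>x\<in>UNIV. \<beta> x * \<psi> x) / sqrt (N \<psi>)"
          unfolding u_def by (simp add: sum_divide_distrib)
      moreover have "(\<Sum>x\<in>UNIV. \<beta> x * (u$x)^2) = N \<psi> / N \<psi>"
        proof -
          have "(\<Sum>x\<in>UNIV. \<beta> x * (u$x)^2) = (\<Sum>x\<in>UNIV. \<beta> x * (\<psi> x)^2) / N \<psi>"
            unfolding u_def using Np by (simp add: power_divide sum_divide_distrib)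
          thus ?thesis unfolding N_def .
        qed
        ultimately show ?thesis unfolding S_def using that Np by simp
      qed
      have "F u = Bf c \<beta> (\<lambda>x. (1 / sqrt (N \<psi>)) * \<psi> x) (\<lambda>x. (1 / sqrt (N \<psi>)) * \<psi> x)"
      proof -
        have e: "(\<lambda>x. u$x) = (\<lambda>x. (1 / sqrt (N \<psi>)) * \<psi> x)" by (rule ext) (simp add: u_def)
        show ?thesis unfolding F_def e ..
      qed
      also have "\<dots> = Bf c \<beta> \<psi> \<psi> / N \<psi>"
        unfolding Bf_scale using Np by (simp add: power_divide)
      finally have "l0 \<le> Bf c \<beta> \<psi> \<psi> / N \<psi>"
        using v0min[OF uS] unfolding l0_def F_def \<phi>0_def by simp
      thus ?thesis using Np by (simp add: field_simps)
    qed
    have claim2: "Bf c \<beta> \<phi>0 \<psi> = l0 * (\<Sum>x\<in>UNIV. \<beta> x * \<phi>0 x * \<psi> x)"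
      if o\<psi>: "(\<Sum>x\<in>UNIV. \<beta> x * \<psi> x) = 0" for \<psi>
    proof -
      let ?b = "Bf c \<beta> \<phi>0 \<psi> - l0 * (\<Sum>x\<in>UNIV. \<beta> x * \<phi>0 x * \<psi> x)"
      let ?a = "Bf c \<beta> \<psi> \<psi> - l0 * N \<psi>"
      have "2 * t * ?b + t^2 * ?a \<ge> 0" for t
      proof -
        have ot: "(\<Sum>x\<in>UNIV. \<beta> x * (\<phi>0 x + t * \<psi> x)) = 0"
          using o0 o\<psi> by (simp add: algebra_simps sum.distrib sum_distrib_left[symmetric])
        have "N (\<lambda>x. \<phi>0 x + t * \<psi> x) = N \<phi>0 + 2 * t * (\<Sum>x\<in>UNIV. \<beta> x * \<phi>0 x * \<psi> x) + t^2 * N \<psi>"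
          unfolding N_def by (simp add: algebra_simps power2_eq_square sum.distrib sum_distrib_left)
        moreover have "Bf c \<beta> (\<lambda>x. \<phi>0 x + t * \<psi> x) (\<lambda>x. \<phi>0 x + t * \<psi> x)
            = l0 + 2 * t * Bf c \<beta> \<phi>0 \<psi> + t^2 * Bf c \<beta> \<psi> \<psi>"
          unfolding Bf_expand Bf_comm[OF sym, where \<phi>=\<psi> and \<psi>=\<phi>0] l0_def by simp
        ultimately show ?thesis using claim1[OF ot] N0 by (simp add: algebra_simps)
      qed
      hence "?b = 0" by (rule quad_zero)
      thus ?thesis by simp
    qed
    define r where "r = (\<lambda>x. - A_RW c \<beta> \<phi>0 x - l0 * \<phi>0 x)"
    have sr: "(\<Sum>x\<in>UNIV. \<beta> x * r x) = 0"
    proof -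
      have "(\<Sum>x\<in>UNIV. \<beta> x * r x) = Bf c \<beta> \<phi>0 (\<lambda>_. 1) - l0 * (\<Sum>x\<in>UNIV. \<beta> x * \<phi>0 x)"
        unfolding r_def Bf_A by (simp add: algebra_simps sum_subtractf sum_distrib_left)
      thus ?thesis using Bf_one[OF sym] o0 by simp
    qed
    have "Bf c \<beta> \<phi>0 r - l0 * (\<Sum>x\<in>UNIV. \<beta> x * \<phi>0 x * r x)
        = (\<Sum>x\<in>UNIV. \<beta> x * r x * (- A_RW c \<beta> \<phi>0 x) - l0 * (\<beta> x * \<phi>0 x * r x))"
      unfolding Bf_A by (simp add: sum_subtractf sum_distrib_left)
    also have "\<dots> = (\<Sum>x\<in>UNIV. \<beta> x * r x * r x)"
      by (rule sum.cong) (simp_all add: r_def algebra_simps)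
    finally have "(\<Sum>x\<in>UNIV. \<beta> x * r x * r x) = Bf c \<beta> \<phi>0 r - l0 * (\<Sum>x\<in>UNIV. \<beta> x * \<phi>0 x * r x)"
      by simp
    also have "\<dots> = 0" using claim2[OF sr] by simp
    finally have "N r = 0" unfolding N_def by (simp add: power2_eq_square mult_ac)
    hence eig: "\<And>x. - A_RW c \<beta> \<phi>0 x = l0 * \<phi>0 x" using Nzero[of r] unfolding r_def by simp
    have l0nz: "l0 \<noteq> 0"
    proof
      assume "l0 = 0"
      hence const: "\<phi>0 x = \<phi>0 y" for x y
        using Bf_zero_const[where c=c and \<beta>=\<beta> and \<phi>=\<phi>0, OF sym nn bp conn] unfolding l0_def by blast
      obtain x0 :: 'v where True by blast
      have "(\<Sum>x\<in>UNIV. \<beta> x * \<phi>0 x) = \<phi>0 x0 * (\<Sum>x\<in>UNIV. \<beta> x)"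
      proof -
        have "(\<Sum>x\<in>UNIV. \<beta> x * \<phi>0 x) = (\<Sum>x\<in>UNIV. \<beta> x * \<phi>0 x0)"
          by (rule sum.cong) (use const in auto)
        thus ?thesis by (simp add: sum_distrib_right[symmetric] mult_ac)
      qed
      moreover have "(\<Sum>x\<in>UNIV. \<beta> x) > 0" using bp by (simp add: sum_pos)
      ultimately have "\<phi>0 x0 = 0" using o0 by simp
      hence "N \<phi>0 = 0" using const[of _ x0] unfolding N_def by simp
      thus False using N0 by simp
    qed
    have ex0: "\<exists>x. \<phi>0 x \<noteq> 0"
    proof (rule ccontr)
      assume "\<not> (\<exists>x. \<phi>0 x \<noteq> 0)"
      hence "N \<phi>0 = 0" unfolding N_def by simp
      thus False using N0 by simp
    qed
    have l0mem: "l0 \<in> {l. l \<noteq> 0 \<and> is_eigenvalue_negA c \<beta> l}"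
      using l0nz eig ex0 unfolding is_eigenvalue_negA_def by blast
    have bdd: "bdd_below {l. l \<noteq> 0 \<and> is_eigenvalue_negA c \<beta> l}"
    proof (rule bdd_belowI[of _ 0])
      fix l assume "l \<in> {l. l \<noteq> 0 \<and> is_eigenvalue_negA c \<beta> l}"
      then obtain \<psi> where nz: "\<exists>x. \<psi> x \<noteq> 0" and ev: "\<And>x. - A_RW c \<beta> \<psi> x = l * \<psi> x"
        unfolding is_eigenvalue_negA_def by blast
      have "Bf c \<beta> \<psi> \<psi> = l * N \<psi>"
        unfolding Bf_A N_def ev by (simp add: sum_distrib_left power2_eq_square mult_ac)
      moreover have "N \<psi> > 0" using Nnn[of \<psi>] Nzero[of \<psi>] nz by force
      moreover have "Bf c \<beta> \<psi> \<psi> \<ge> 0" by (rule Bf_nonneg[OF sym nn bp])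
      ultimately show "0 \<le> l" by (simp add: zero_le_mult_iff)
    qed
    have "gap_RW c \<beta> \<le> l0" unfolding gap_RW_def by (rule cInf_lower[OF l0mem bdd])
    hence "gap_RW c \<beta> * N \<phi> \<le> l0 * N \<phi>" using Nnn[of \<phi>] by (simp add: mult_right_mono)
    also have "\<dots> \<le> Bf c \<beta> \<phi> \<phi>" by (rule claim1[OF orth])
    finally show ?thesis unfolding N_def .
  qed
qed



definition ins :: "'v \<Rightarrow> ('v \<Rightarrow> nat) \<Rightarrow> ('v \<Rightarrow> nat)" where
  "ins x \<xi> = \<xi>(x := \<xi> x + 1)"

lemma finite_Xi: "finite (Xi k :: ('v::finite \<Rightarrow> nat) set)"
proof -
  have "Xi k \<subseteq> PiE UNIV (\<lambda>_::'v. {..k})"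
  proof
    fix \<eta> :: "'v \<Rightarrow> nat" assume "\<eta> \<in> Xi k"
    hence s: "(\<Sum>x\<in>UNIV. \<eta> x) = k" unfolding Xi_def by simp
    have "\<eta> z \<le> k" for z using member_le_sum[of z UNIV \<eta>] s by simp
    thus "\<eta> \<in> PiE UNIV (\<lambda>_. {..k})" by (simp add: PiE_UNIV_domain)
  qed
  moreover have "finite (PiE UNIV (\<lambda>_::'v. {..k}))" by (intro finite_PiE) auto
  ultimately show ?thesis by (rule finite_subset)
qed

lemma sum_upd:
  fixes \<xi> :: "'v::finite \<Rightarrow> nat"
  shows "(\<Sum>z\<in>UNIV. (\<xi>(x := v)) z) + \<xi> x = (\<Sum>z\<in>UNIV. \<xi> z) + v"
proof -
  have a: "(\<Sum>z\<in>UNIV. (\<xi>(x := v)) z) = v + (\<Sum>z\<in>UNIV - {x}. \<xi> z)"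
    by (subst sum.remove[of UNIV x]) (auto intro!: sum.cong)
  have b: "(\<Sum>z\<in>UNIV. \<xi> z) = \<xi> x + (\<Sum>z\<in>UNIV - {x}. \<xi> z)"
    by (subst sum.remove[of UNIV x]) auto
  show ?thesis using a b by simp
qed

lemma bij_ins:
  assumes "k \<ge> 1"
  shows "bij_betw (ins x) (Xi (k - 1) :: ('v::finite \<Rightarrow> nat) set) {\<eta>\<in>Xi k. \<eta> x \<ge> 1}"
proof (rule bij_betw_byWitness[where f'="\<lambda>\<eta>. \<eta>(x := \<eta> x - 1)"])
  show "\<forall>a\<in>Xi (k - 1). (ins x a)(x := ins x a x - 1) = a" by (auto simp: ins_def)
  show "\<forall>a\<in>{\<eta> \<in> Xi k. 1 \<le> \<eta> x}. ins x (a(x := a x - 1)) = a" by (auto simp: ins_def)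
  show "ins x ` Xi (k - 1) \<subseteq> {\<eta> \<in> Xi k. 1 \<le> \<eta> x}"
  proof safe
    fix \<xi> :: "'v \<Rightarrow> nat" assume "\<xi> \<in> Xi (k - 1)"
    thus "ins x \<xi> \<in> Xi k" using sum_upd[of \<xi> x "\<xi> x + 1"] assms
      unfolding Xi_def ins_def by simp
    show "1 \<le> ins x \<xi> x" by (simp add: ins_def)
  qed
  show "(\<lambda>\<eta>. \<eta>(x := \<eta> x - 1)) ` {\<eta> \<in> Xi k. 1 \<le> \<eta> x} \<subseteq> Xi (k - 1)"
  proof safe
    fix \<eta> :: "'v \<Rightarrow> nat" assume "\<eta> \<in> Xi k" "1 \<le> \<eta> x"
    thus "\<eta>(x := \<eta> x - 1) \<in> Xi (k - 1)" using sum_upd[of \<eta> x "\<eta> x - 1"] 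
      unfolding Xi_def by simp
  qed
qed

lemma weight_ins:
  fixes \<alpha> :: "'v::finite \<Rightarrow> real"
  assumes ap: "\<And>x. \<alpha> x > 0"
  shows "mu_weight \<alpha> (ins x \<xi>) * (real (\<xi> x) + 1) = mu_weight \<alpha> \<xi> * (\<alpha> x + real (\<xi> x))"
proof -
  define g where "g = (\<lambda>z n. Gamma (\<alpha> z + real n) / (Gamma (\<alpha> z) * fact n))"
  have w: "mu_weight \<alpha> \<eta> = g x (\<eta> x) * (\<Prod>z\<in>UNIV - {x}. g z (\<eta> z))" for \<eta>
    unfolding mu_weight_def g_def by (subst prod.remove[of UNIV x]) auto
  have rest: "(\<Prod>z\<in>UNIV - {x}. g z (ins x \<xi> z)) = (\<Prod>z\<in>UNIV - {x}. g z (\<xi> z))"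
    by (rule prod.cong) (auto simp: ins_def)
  have gx: "g x (\<xi> x + 1) * (real (\<xi> x) + 1) = g x (\<xi> x) * (\<alpha> x + real (\<xi> x))"
  proof -
    have pos: "\<alpha> x + real (\<xi> x) > 0" using ap[of x] by simp
    hence ni: "\<alpha> x + real (\<xi> x) \<notin> \<int>\<^sub>\<le>\<^sub>0" by (auto simp: nonpos_Ints_def)
    have G: "Gamma (\<alpha> x + real (\<xi> x + 1)) = (\<alpha> x + real (\<xi> x)) * Gamma (\<alpha> x + real (\<xi> x))"
      using Gamma_plus1[OF ni] by (simp add: add_ac)
    have g0: "Gamma (\<alpha> x) \<noteq> 0" using ap[of x] by (metis Gamma_real_pos less_irrefl)
    have f0: "(fact (\<xi> x) :: real) \<noteq> 0" by simp
    have F: "(fact (\<xi> x + 1) :: real) = (real (\<xi> x) + 1) * fact (\<xi> x)"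
      by (simp add: algebra_simps)
    have n0: "real (\<xi> x) + 1 \<noteq> 0" by linarith
    show ?thesis unfolding g_def G F using g0 f0 n0
      by (simp add: divide_simps del: of_nat_Suc)
  qed
  show ?thesis
    using gx unfolding w[of "ins x \<xi>"] w[of \<xi>] rest by (simp add: ins_def mult_ac)
qed

lemma K_lemma:
  fixes \<alpha> :: "'v::finite \<Rightarrow> real" and G :: "('v \<Rightarrow> nat) \<Rightarrow> 'v \<Rightarrow> real"
  assumes ap: "\<And>x. \<alpha> x > 0" and k: "k \<ge> 1"
  shows "(\<Sum>\<eta>\<in>Xi k. \<Sum>x\<in>UNIV. real (\<eta> x) * mu_weight \<alpha> \<eta> * G \<eta> x)
       = (\<Sum>\<xi>\<in>Xi (k - 1). \<Sum>x\<in>UNIV. (\<alpha> x + real (\<xi> x)) * mu_weight \<alpha> \<xi> * G (ins x \<xi>) x)"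
proof -
  have "(\<Sum>\<eta>\<in>Xi k. \<Sum>x\<in>UNIV. real (\<eta> x) * mu_weight \<alpha> \<eta> * G \<eta> x)
      = (\<Sum>x\<in>UNIV. \<Sum>\<eta>\<in>Xi k. real (\<eta> x) * mu_weight \<alpha> \<eta> * G \<eta> x)"
    by (rule sum.swap)
  also have "\<dots> = (\<Sum>x\<in>UNIV. \<Sum>\<xi>\<in>Xi (k - 1). (\<alpha> x + real (\<xi> x)) * mu_weight \<alpha> \<xi> * G (ins x \<xi>) x)"
  proof (rule sum.cong[OF refl])
    fix x
    have "(\<Sum>\<eta>\<in>Xi k. real (\<eta> x) * mu_weight \<alpha> \<eta> * G \<eta> x)
        = (\<Sum>\<eta>\<in>{\<eta>\<in>Xi k. \<eta> x \<ge> 1}. real (\<eta> x) * mu_weight \<alpha> \<eta> * G \<eta> x)"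
      by (rule sum.mono_neutral_right) (auto simp: finite_Xi)
    also have "\<dots> = (\<Sum>\<xi>\<in>Xi (k - 1). real (ins x \<xi> x) * mu_weight \<alpha> (ins x \<xi>) * G (ins x \<xi>) x)"
      by (rule sum.reindex_bij_betw[OF bij_ins[OF k], symmetric])
    also have "\<dots> = (\<Sum>\<xi>\<in>Xi (k - 1). (\<alpha> x + real (\<xi> x)) * mu_weight \<alpha> \<xi> * G (ins x \<xi>) x)"
    proof (rule sum.cong[OF refl])
      fix \<xi> :: "'v \<Rightarrow> nat"
      have "real (ins x \<xi> x) = real (\<xi> x) + 1" by (simp add: ins_def)
      thus "real (ins x \<xi> x) * mu_weight \<alpha> (ins x \<xi>) * G (ins x \<xi>) x
          = (\<alpha> x + real (\<xi> x)) * mu_weight \<alpha> \<xi> * G (ins x \<xi>) x"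
        using weight_ins[of \<alpha> x \<xi>] ap by (simp add: mult_ac)
    qed
    finally show "(\<Sum>\<eta>\<in>Xi k. real (\<eta> x) * mu_weight \<alpha> \<eta> * G \<eta> x)
        = (\<Sum>\<xi>\<in>Xi (k - 1). (\<alpha> x + real (\<xi> x)) * mu_weight \<alpha> \<xi> * G (ins x \<xi>) x)" .
  qed
  also have "\<dots> = (\<Sum>\<xi>\<in>Xi (k - 1). \<Sum>x\<in>UNIV. (\<alpha> x + real (\<xi> x)) * mu_weight \<alpha> \<xi> * G (ins x \<xi>) x)"
    by (rule sum.swap)
  finally show ?thesis .
qed



lemma move_ins: "move (ins x \<xi>) x y = ins y \<xi>"
  unfolding move_def ins_def by (rule ext) auto

lemma weight_pos:
  fixes \<alpha> :: "'v::finite \<Rightarrow> real"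
  assumes ap: "\<And>x. \<alpha> x > 0"
  shows "mu_weight \<alpha> \<eta> > 0"
  unfolding mu_weight_def
proof (rule prod_pos)
  fix x
  have "Gamma (\<alpha> x + real (\<eta> x)) > 0" using ap[of x] by (intro Gamma_real_pos) simp
  moreover have "Gamma (\<alpha> x) > 0" using ap[of x] by simp
  ultimately show "0 < Gamma (\<alpha> x + real (\<eta> x)) / (Gamma (\<alpha> x) * fact (\<eta> x))" by simp
qed

lemma Xi_nonempty: "Xi k \<noteq> ({} :: ('v::finite \<Rightarrow> nat) set)"
proof -
  obtain x0 :: 'v where True by blast
  have "(\<lambda>z. if z = x0 then k else 0) \<in> Xi k" unfolding Xi_def by simp
  thus ?thesis by blast
qed

theorem lemma3p3:
  fixes c :: "'v::finite \<Rightarrow> 'v \<Rightarrow> real" and \<alpha> :: "'v \<Rightarrow> real"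
    and k :: nat and f :: "('v \<Rightarrow> nat) \<Rightarrow> real"
  assumes c_sym: "\<And>x y. c x y = c y x"
    and c_nonneg: "\<And>x y. c x y \<ge> 0"
    and connected: "\<And>x y. (x, y) \<in> {(a, b). c a b > 0}\<^sup>*"
    and \<alpha>_pos: "\<And>x. \<alpha> x > 0"
    and k_pos: "k \<ge> 1"
    and annih: "\<And>\<xi>. \<xi> \<in> Xi (k - 1) \<Longrightarrow> creation \<alpha> f \<xi> = 0"
  shows "energy c \<alpha> k f \<ge>
    real k * (INF \<xi>\<in>Xi (k - 1). gap_RW c (\<lambda>x. \<alpha> x + real (\<xi> x))) * Var_mu \<alpha> k f"
proof -
  define w where "w = mu_weight \<alpha>"
  define Z where "Z = (\<Sum>\<eta>\<in>Xi k. w \<eta>)"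
  define Gm where "Gm = (INF \<xi>\<in>Xi (k - 1). gap_RW c (\<lambda>x. \<alpha> x + real (\<xi> x)))"
  have wpos: "w \<eta> > 0" for \<eta> unfolding w_def by (rule weight_pos[OF \<alpha>_pos])
  have Zpos: "Z > 0" unfolding Z_def
    using Xi_nonempty[of k] finite_Xi[of k] wpos by (intro sum_pos) auto
  have mu_eq: "mu \<alpha> k \<eta> = w \<eta> / Z" for \<eta> unfolding mu_def w_def Z_def ..
  have sumk: "(\<Sum>x\<in>UNIV. real (\<eta> x)) = real k" if "\<eta> \<in> Xi k" for \<eta>
    using that unfolding Xi_def by (simp flip: of_nat_sum)
  have Kgen: "(\<Sum>\<eta>\<in>Xi k. \<Sum>x\<in>UNIV. real (\<eta> x) * w \<eta> * H \<eta>) = real k * (\<Sum>\<eta>\<in>Xi k. w \<eta> * H \<eta>)" for H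
  proof -
    have "(\<Sum>\<eta>\<in>Xi k. \<Sum>x\<in>UNIV. real (\<eta> x) * w \<eta> * H \<eta>) = (\<Sum>\<eta>\<in>Xi k. real k * (w \<eta> * H \<eta>))"
    proof (rule sum.cong[OF refl])
      fix \<eta> :: "'v \<Rightarrow> nat" assume "\<eta> \<in> Xi k"
      thus "(\<Sum>x\<in>UNIV. real (\<eta> x) * w \<eta> * H \<eta>) = real k * (w \<eta> * H \<eta>)"
      proof -
        have "(\<Sum>x\<in>UNIV. real (\<eta> x) * w \<eta> * H \<eta>) = (\<Sum>x\<in>UNIV. real (\<eta> x)) * (w \<eta> * H \<eta>)"
          by (simp add: sum_distrib_left sum_distrib_right mult_ac)
        thus ?thesis using sumk[OF \<open>\<eta> \<in> Xi k\<close>] by simp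
      qed
    qed
    thus ?thesis by (simp add: sum_distrib_left)
  qed
  have mean0: "(\<Sum>\<eta>\<in>Xi k. w \<eta> * f \<eta>) = 0"
  proof -
    have "real k * (\<Sum>\<eta>\<in>Xi k. w \<eta> * f \<eta>) = (\<Sum>\<eta>\<in>Xi k. \<Sum>x\<in>UNIV. real (\<eta> x) * w \<eta> * f \<eta>)"
      by (rule Kgen[symmetric])
    also have "\<dots> = (\<Sum>\<xi>\<in>Xi (k - 1). \<Sum>x\<in>UNIV. (\<alpha> x + real (\<xi> x)) * w \<xi> * f (ins x \<xi>))"
      unfolding w_def by (rule K_lemma[OF \<alpha>_pos k_pos])
    also have "\<dots> = (\<Sum>\<xi>\<in>Xi (k - 1). w \<xi> * creation \<alpha> f \<xi>)"
      unfolding creation_def ins_def by (simp add: sum_distrib_left mult_ac add_ac)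
    also have "\<dots> = 0" using annih by simp
    finally show ?thesis using k_pos by simp
  qed
  have inner1: "inner_mu \<alpha> k f (\<lambda>_. 1) = 0"
    unfolding inner_mu_def mu_eq using mean0 by (simp add: sum_divide_distrib[symmetric] mult_ac)
  have innerff: "inner_mu \<alpha> k f f = (\<Sum>\<eta>\<in>Xi k. w \<eta> * (f \<eta>)^2) / Z"
    unfolding inner_mu_def mu_eq by (simp add: sum_divide_distrib power2_eq_square mult_ac)
  have var: "Var_mu \<alpha> k f = inner_mu \<alpha> k f f" unfolding Var_mu_def inner1 by simp
  define E' where "E' = (\<Sum>\<eta>\<in>Xi k. w \<eta> * f \<eta> * (- gen_L c \<alpha> f \<eta>))"
  have en: "energy c \<alpha> k f = E' / Z"
    unfolding energy_def inner_mu_def mu_eq E'_def by (simp add: sum_divide_distrib)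
  define GG where "GG = (\<lambda>\<eta> x. f \<eta> * (\<Sum>y\<in>UNIV. c x y * (\<alpha> y + real (\<eta> y)) * (f \<eta> - f (move \<eta> x y))))"
  define \<beta> where "\<beta> = (\<lambda>\<xi> x. \<alpha> x + real (\<xi> x))"
  define \<phi> where "\<phi> = (\<lambda>\<xi> x. f (ins x \<xi>))"
  have "E' = (\<Sum>\<eta>\<in>Xi k. \<Sum>x\<in>UNIV. real (\<eta> x) * w \<eta> * GG \<eta> x)"
    unfolding E'_def
  proof (rule sum.cong[OF refl])
    fix \<eta> :: "'v \<Rightarrow> nat"
    have "- gen_L c \<alpha> f \<eta> = (\<Sum>x\<in>UNIV. real (\<eta> x) *
        (\<Sum>y\<in>UNIV. c x y * (\<alpha> y + real (\<eta> y)) * (f \<eta> - f (move \<eta> x y))))"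
    proof -
      have i: "(\<Sum>y\<in>UNIV. c x y * (\<alpha> y + real (\<eta> y)) * (f \<eta> - f (move \<eta> x y)))
          = - (\<Sum>y\<in>UNIV. c x y * (\<alpha> y + real (\<eta> y)) * (f (move \<eta> x y) - f \<eta>))" for x
        unfolding sum_negf[symmetric] by (rule sum.cong[OF refl]) (simp add: algebra_simps)
      show ?thesis unfolding gen_L_def i by (simp only: mult_minus_right sum_negf)
    qed
    thus "w \<eta> * f \<eta> * - gen_L c \<alpha> f \<eta> = (\<Sum>x\<in>UNIV. real (\<eta> x) * w \<eta> * GG \<eta> x)"
      unfolding GG_def by (simp add: sum_distrib_left mult_ac)
  qed
  also have "\<dots> = (\<Sum>\<xi>\<in>Xi (k - 1). \<Sum>x\<in>UNIV. (\<alpha> x + real (\<xi> x)) * w \<xi> * GG (ins x \<xi>) x)"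
    unfolding w_def by (rule K_lemma[OF \<alpha>_pos k_pos])
  also have "\<dots> = (\<Sum>\<xi>\<in>Xi (k - 1). w \<xi> * Bf c (\<beta> \<xi>) (\<phi> \<xi>) (\<phi> \<xi>))"
  proof (rule sum.cong[OF refl])
    fix \<xi> :: "'v \<Rightarrow> nat"
    have inner: "GG (ins x \<xi>) x = \<phi> \<xi> x * (\<Sum>y\<in>UNIV. c x y * \<beta> \<xi> y * (\<phi> \<xi> x - \<phi> \<xi> y))" for x
    proof -
      have "(\<Sum>y\<in>UNIV. c x y * (\<alpha> y + real (ins x \<xi> y)) * (f (ins x \<xi>) - f (ins y \<xi>)))
          = (\<Sum>y\<in>UNIV. c x y * \<beta> \<xi> y * (\<phi> \<xi> x - \<phi> \<xi> y))"
      proof (rule sum.cong[OF refl])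
        fix y
        show "c x y * (\<alpha> y + real (ins x \<xi> y)) * (f (ins x \<xi>) - f (ins y \<xi>)) =
            c x y * \<beta> \<xi> y * (\<phi> \<xi> x - \<phi> \<xi> y)"
          by (cases "y = x") (auto simp: \<beta>_def \<phi>_def ins_def)
      qed
      thus ?thesis unfolding GG_def move_ins by (simp add: \<phi>_def)
    qed
    show "(\<Sum>x\<in>UNIV. (\<alpha> x + real (\<xi> x)) * w \<xi> * GG (ins x \<xi>) x) = w \<xi> * Bf c (\<beta> \<xi>) (\<phi> \<xi>) (\<phi> \<xi>)"
      unfolding inner Bf_def by (simp add: sum_distrib_left \<beta>_def mult_ac)
  qed
  finally have E'eq: "E' = (\<Sum>\<xi>\<in>Xi (k - 1). w \<xi> * Bf c (\<beta> \<xi>) (\<phi> \<xi>) (\<phi> \<xi>))" .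
  have bound: "Bf c (\<beta> \<xi>) (\<phi> \<xi>) (\<phi> \<xi>) \<ge> Gm * (\<Sum>x\<in>UNIV. \<beta> \<xi> x * (\<phi> \<xi> x)^2)"
    if "\<xi> \<in> Xi (k - 1)" for \<xi>
  proof -
    have bp: "\<And>x. \<beta> \<xi> x > 0" unfolding \<beta>_def using \<alpha>_pos by (simp add: add_pos_nonneg)
    have orth: "(\<Sum>x\<in>UNIV. \<beta> \<xi> x * \<phi> \<xi> x) = 0"
      using annih[OF that] unfolding creation_def \<beta>_def \<phi>_def ins_def by (simp add: add_ac)
    have gb: "Bf c (\<beta> \<xi>) (\<phi> \<xi>) (\<phi> \<xi>) \<ge> gap_RW c (\<beta> \<xi>) * (\<Sum>x\<in>UNIV. \<beta> \<xi> x * (\<phi> \<xi> x)^2)"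
      by (rule gap_bound[OF c_sym c_nonneg bp connected orth])
    have "Gm \<le> gap_RW c (\<beta> \<xi>)" unfolding Gm_def \<beta>_def
      by (rule cINF_lower[OF bdd_below_finite[OF finite_imageI[OF finite_Xi]] that])
    moreover have "(\<Sum>x\<in>UNIV. \<beta> \<xi> x * (\<phi> \<xi> x)^2) \<ge> 0"
      using bp by (intro sum_nonneg) (simp add: less_imp_le)
    ultimately have "Gm * (\<Sum>x\<in>UNIV. \<beta> \<xi> x * (\<phi> \<xi> x)^2) \<le> gap_RW c (\<beta> \<xi>) * (\<Sum>x\<in>UNIV. \<beta> \<xi> x * (\<phi> \<xi> x)^2)"
      by (rule mult_right_mono)
    with gb show ?thesis by simp
  qed
  have "E' \<ge> (\<Sum>\<xi>\<in>Xi (k - 1). w \<xi> * (Gm * (\<Sum>x\<in>UNIV. \<beta> \<xi> x * (\<phi> \<xi> x)^2)))"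
    unfolding E'eq using bound wpos by (intro sum_mono mult_left_mono) (auto simp: less_imp_le)
  also have "(\<Sum>\<xi>\<in>Xi (k - 1). w \<xi> * (Gm * (\<Sum>x\<in>UNIV. \<beta> \<xi> x * (\<phi> \<xi> x)^2)))
      = Gm * (\<Sum>\<xi>\<in>Xi (k - 1). \<Sum>x\<in>UNIV. (\<alpha> x + real (\<xi> x)) * w \<xi> * (f (ins x \<xi>))^2)"
    unfolding \<beta>_def \<phi>_def by (simp add: sum_distrib_left mult_ac)
  also have "(\<Sum>\<xi>\<in>Xi (k - 1). \<Sum>x\<in>UNIV. (\<alpha> x + real (\<xi> x)) * w \<xi> * (f (ins x \<xi>))^2)
      = (\<Sum>\<eta>\<in>Xi k. \<Sum>x\<in>UNIV. real (\<eta> x) * w \<eta> * (f \<eta>)^2)"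
    unfolding w_def by (rule K_lemma[OF \<alpha>_pos k_pos, symmetric])
  also have "\<dots> = real k * (\<Sum>\<eta>\<in>Xi k. w \<eta> * (f \<eta>)^2)" by (rule Kgen)
  finally have "E' \<ge> Gm * (real k * (\<Sum>\<eta>\<in>Xi k. w \<eta> * (f \<eta>)^2))" .
  hence "E' / Z \<ge> Gm * (real k * (\<Sum>\<eta>\<in>Xi k. w \<eta> * (f \<eta>)^2)) / Z"
    using Zpos by (simp add: divide_right_mono)
  thus ?thesis unfolding en var innerff Gm_def[symmetric] by (simp add: mult_ac)
qed

end
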